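(* For every integer $k\ge 1$, let $a^{(k)}_n=|S_n(123,\,213,\,1(k+1)k(k-1)\cdots 2)|$ for $n\ge 0$, with $a^{(k)}_0=1$ counting the empty permutation. Then $$\sum_{n\ge 0} a^{(k)}_n x^n=\frac{1-x}{1-2x+x^{k+1}}.$$ (In particular, for $k=3$ this equals $\frac{1}{1-x-x^2-x^3}$, the generating function of the Tribonacci numbers $1,1,2,4,7,13,24,\dots$.) *)

theory Defs
  imports Main "HOL-Computational_Algebra.Formal_Power_Series"
begin

text \<open>Permutations of [n] = {1..n} in one-line notation, as lists.
  For n = 0 this is the singleton set containing the empty permutation.\<close>
definition perms :: "nat \<Rightarrow> nat list set" where
  "perms n = {xs. distinct xs \<and> set xs = {1..n}}"

definition contains_pattern :: "nat list \<Rightarrow> nat list \<Rightarrow> bool" where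
  "contains_pattern \<sigma> \<tau> \<longleftrightarrow>
     (\<exists>is. length is = length \<tau> \<and> sorted_wrt (<) is \<and> (\<forall>i\<in>set is. i < length \<sigma>) \<and>
       (\<forall>j<length \<tau>. \<forall>l<length \<tau>. (\<sigma> ! (is ! j) < \<sigma> ! (is ! l)) \<longleftrightarrow> (\<tau> ! j < \<tau> ! l)))"

definition avoids :: "nat list \<Rightarrow> nat list set \<Rightarrow> bool" where
  "avoids \<sigma> P \<longleftrightarrow> (\<forall>\<tau>\<in>P. \<not> contains_pattern \<sigma> \<tau>)"

definition pat_k :: "nat \<Rightarrow> nat list" where
  "pat_k k = 1 # rev [2..<k+2]"

definition a_seq :: "nat \<Rightarrow> nat \<Rightarrow> nat" where
  "a_seq k n = card {\<sigma> \<in> perms n. avoids \<sigma> {[1,2,3], [2,1,3], pat_k k}}"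

end

theory Submission
  imports Defs
begin


definition nobad :: "nat list \<Rightarrow> bool" where
  "nobad s \<longleftrightarrow> (\<forall>i j l. i < j \<and> j < l \<and> l < length s \<longrightarrow> \<not> (s!i < s!l \<and> s!j < s!l))"

lemma all3: "(\<forall>j<3. P (j::nat)) \<longleftrightarrow> P 0 \<and> P 1 \<and> P 2"
  by (auto simp: less_Suc_eq eval_nat_numeral)

lemma all3': "(\<forall>j<Suc (Suc (Suc 0)). P (j::nat)) \<longleftrightarrow> P 0 \<and> P 1 \<and> P 2"
  by (auto simp: less_Suc_eq eval_nat_numeral)

lemma contains3D:
  assumes "contains_pattern s [p0,p1,p2]"
  shows "\<exists>i j l. i < j \<and> j < l \<and> l < length s \<and>
     (s!i < s!j \<longleftrightarrow> p0 < p1) \<and> (s!i < s!l \<longleftrightarrow> p0 < p2) \<and> (s!j < s!l \<longleftrightarrow> p1 < p2)"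
proof -
  obtain "is" where L: "length is = length [p0,p1,p2]" and S: "sorted_wrt (<) is" and R: "\<forall>i\<in>set is. i < length s"
    and O: "\<forall>j<length [p0,p1,p2]. \<forall>l<length [p0,p1,p2]. (s ! (is ! j) < s ! (is ! l)) \<longleftrightarrow> ([p0,p1,p2] ! j < [p0,p1,p2] ! l)"
    using assms unfolding contains_pattern_def by blast
  have "is = [is!0, is!1, is!2]" using L by (simp add: list_eq_iff_nth_eq all3')
  then obtain i j l where "is = [i,j,l]" by blast
  then show ?thesis using S R O[simplified, unfolded all3'] by (intro exI[of _ i] exI[of _ j] exI[of _ l]) auto
qed

lemma contains3I:
  assumes "i < j" "j < l" "l < length s"
     "(s!i < s!j \<longleftrightarrow> p0 < p1)" "(s!i < s!l \<longleftrightarrow> p0 < p2)" "(s!j < s!l \<longleftrightarrow> p1 < p2)"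
     "(s!j < s!i \<longleftrightarrow> p1 < p0)" "(s!l < s!i \<longleftrightarrow> p2 < p0)" "(s!l < s!j \<longleftrightarrow> p2 < p1)"
  shows "contains_pattern s [p0,p1,p2]"
  unfolding contains_pattern_def
  apply (rule exI[of _ "[i,j,l]"])
  using assms less_trans[of i j l] by (auto simp add: less_Suc_eq)

lemma nobad_iff:
  assumes "distinct s"
  shows "nobad s \<longleftrightarrow> \<not> contains_pattern s [1,2,3] \<and> \<not> contains_pattern s [2,1,3]"
proof
  assume "nobad s"
  then show "\<not> contains_pattern s [1,2,3] \<and> \<not> contains_pattern s [2,1,3]"
    unfolding nobad_def using contains3D[of s 1 2 3] contains3D[of s 2 1 3] by force
next
  assume A: "\<not> contains_pattern s [1,2,3] \<and> \<not> contains_pattern s [2,1,3]"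
  show "nobad s" unfolding nobad_def
  proof (intro allI impI notI)
    fix i j l assume *: "i < j \<and> j < l \<and> l < length s" "s!i < s!l \<and> s!j < s!l"
    have "s!i \<noteq> s!j" using assms * by (simp add: nth_eq_iff_index_eq)
    then have "s!i < s!j \<or> s!j < s!i" by auto
    then show False
    proof
      assume "s!i < s!j" then have "contains_pattern s [1,2,3]" using * by (intro contains3I[of i j l]) auto
      then show False using A by simp
    next
      assume "s!j < s!i" then have "contains_pattern s [2,1,3]" using * by (intro contains3I[of i j l]) auto
      then show False using A by simp
    qed
  qed
qed



definition blk :: "nat \<Rightarrow> nat \<Rightarrow> nat list" where "blk a n = rev [Suc a..<Suc n]"

lemma length_blk[simp]: "length (blk a n) = n - a"
  by (simp add: blk_def del: upt_Suc)

lemma nth_blk: "i < n - a \<Longrightarrow> blk a n ! i = n - i"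
  by (simp add: blk_def rev_nth del: upt_Suc)

lemma set_blk: "set (blk a n) = {Suc a..n}"
  by (auto simp add: blk_def)

lemma distinct_blk: "distinct (blk a n)"
  by (simp add: blk_def)

lemma nth_shape:
  assumes "a \<le> n"
  shows "(a # blk a n @ t) ! p =
    (if p = 0 then a else if p \<le> n - a then n + 1 - p else t ! (p - 1 - (n - a)))"
proof (cases p)
  case 0 then show ?thesis by simp
next
  case (Suc q)
  show ?thesis
  proof (cases "q < n - a")
    case True
    then show ?thesis using Suc assms by (simp add: nth_append nth_blk)
  next
    case False
    then show ?thesis using Suc assms by (simp add: nth_append)
  qed
qed

lemma length_shape: "length (a # blk a n @ t) = 1 + (n - a) + length t"
  by simp
declare length_blk[simp del]

lemma nobad_shape:
  assumes "a \<le> n" "\<forall>x\<in>set t. x < a" "nobad t"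
  shows "nobad (a # blk a n @ t)"
  unfolding nobad_def length_shape
proof (intro allI impI notI)
  fix i j l
  assume I: "i < j \<and> j < l \<and> l < 1 + (n - a) + length t"
     and V: "(a # blk a n @ t) ! i < (a # blk a n @ t) ! l \<and>
             (a # blk a n @ t) ! j < (a # blk a n @ t) ! l"
  let ?m = "n - a"
  define s where "s = a # blk a n @ t"
  have ns: "\<And>p. s ! p = (if p = 0 then a else if p \<le> n - a then n + 1 - p else t ! (p - 1 - (n - a)))"
    unfolding s_def using nth_shape[OF assms(1)] .
  note V = V[folded s_def]
  show False
  proof (cases "l \<le> ?m")
    case True
    then show ?thesis using I V assms(1) by (auto simp: ns split: if_splits)
  next
    case False
    have tl: "t ! (l - 1 - ?m) < a" using assms(2) I False by (auto)
    have "i > ?m"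
    proof (rule ccontr)
      assume "\<not> ?m < i"
      then show False using V I False tl assms(1) by (auto simp: ns split: if_splits)
    qed
    then show ?thesis using V I False assms(3) unfolding nobad_def
      apply (simp add: ns)
      apply (drule spec[of _ "i - 1 - ?m"], drule spec[of _ "j - 1 - ?m"], drule spec[of _ "l - 1 - ?m"])
      by (auto; linarith)
  qed
qed

lemma nobad_append: "nobad (xs @ ys) \<Longrightarrow> nobad ys"
  unfolding nobad_def
  apply (intro allI impI notI)
  subgoal for i j l
    apply (drule spec[of _ "length xs + i"], drule spec[of _ "length xs + j"], drule spec[of _ "length xs + l"])
    by (auto simp: nth_append)
  done

lemma contains_append:
  assumes "contains_pattern ys p" shows "contains_pattern (xs @ ys) p"
proof -
  obtain "is" where L: "length is = length p" and S: "sorted_wrt (<) is" and R: "\<forall>i\<in>set is. i < length ys"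
    and O: "\<forall>j<length p. \<forall>l<length p. (ys ! (is ! j) < ys ! (is ! l)) \<longleftrightarrow> (p ! j < p ! l)"
    using assms unfolding contains_pattern_def by blast
  show ?thesis unfolding contains_pattern_def
    apply (rule exI[of _ "map ((+) (length xs)) is"])
    using L S R O by (auto simp: sorted_wrt_map nth_append)
qed

lemma len_patk: "length (pat_k k) = k + 1" by (simp add: pat_k_def del: upt_Suc)
lemma patk0: "pat_k k ! 0 = 1" by (simp add: pat_k_def)
lemma patkj: assumes "1 \<le> j" "j \<le> k" shows "pat_k k ! j = k + 2 - j"
proof -
  obtain q where q: "j = Suc q" "q < k" using assms by (cases j) auto
  have "pat_k k ! j = rev [2..<k+2] ! q" unfolding pat_k_def q nth_Cons_Suc ..
  also have "\<dots> = [2..<k+2] ! (length [2..<k+2] - Suc q)"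
    by (rule rev_nth) (use q in \<open>simp del: upt_Suc\<close>)
  also have "\<dots> = k + 2 - j"
    by (subst nth_upt) (use q in \<open>auto simp del: upt_Suc\<close>)
  finally show ?thesis .
qed

lemma sorted_lt_nth: "sorted_wrt (<) xs \<Longrightarrow> j < length xs \<Longrightarrow> xs ! 0 + j \<le> xs ! j"
proof (induction j)
  case 0 then show ?case by simp
next
  case (Suc j)
  then have "xs ! j < xs ! Suc j" by (simp add: sorted_wrt_nth_less)
  then show ?case using Suc by simp
qed

lemma contains_patk_shape:
  assumes "a \<le> n" "k \<le> n - a"
  shows "contains_pattern (a # blk a n @ t) (pat_k k)"
proof -
  define s where "s = a # blk a n @ t"
  have ns: "\<And>p. s ! p = (if p = 0 then a else if p \<le> n - a then n + 1 - p else t ! (p - 1 - (n - a)))"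
    unfolding s_def using nth_shape[OF assms(1)] .
  have ls: "length s = 1 + (n - a) + length t" unfolding s_def by (rule length_shape)
  have pv: "\<And>j. j \<le> k \<Longrightarrow> pat_k k ! j = (if j = 0 then 1 else k + 2 - j)"
    using patk0 patkj by auto
  have sv: "\<And>j. j \<le> k \<Longrightarrow> s ! j = (if j = 0 then a else n + 1 - j)"
    using assms by (auto simp: ns)
  have "contains_pattern s (pat_k k)"
    unfolding contains_pattern_def len_patk
  proof (intro exI[of _ "[0..<k+1]"] conjI ballI allI impI)
    show "length [0..<k + 1] = k + 1" by simp
    show "sorted_wrt (<) [0..<k + 1]" by (simp add: sorted_wrt_upt del: upt_Suc)
    show "i < length s" if "i \<in> set [0..<k + 1]" for i using that assms ls by auto
    fix j l assume jl: "j < k + 1" "l < k + 1"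
    then show "(s ! ([0..<k + 1] ! j) < s ! ([0..<k + 1] ! l)) = (pat_k k ! j < pat_k k ! l)"
      using assms by (auto simp: sv pv nth_upt simp del: upt_Suc)
  qed
  then show ?thesis unfolding s_def .
qed

lemma avoid_patk_shape:
  assumes "1 \<le> k" "a \<le> n" "n - a < k" "\<forall>x\<in>set t. x < a" "\<not> contains_pattern t (pat_k k)"
  shows "\<not> contains_pattern (a # blk a n @ t) (pat_k k)"
proof
  define s where "s = a # blk a n @ t"
  have ns: "\<And>p. s ! p = (if p = 0 then a else if p \<le> n - a then n + 1 - p else t ! (p - 1 - (n - a)))"
    unfolding s_def using nth_shape[OF assms(2)] .
  have ls: "length s = 1 + (n - a) + length t" unfolding s_def by (rule length_shape)
  assume "contains_pattern (a # blk a n @ t) (pat_k k)"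
  then obtain "is" where L: "length is = k + 1" and S: "sorted_wrt (<) is" and R: "\<forall>i\<in>set is. i < length s"
    and O: "\<forall>j<k+1. \<forall>l<k+1. (s ! (is ! j) < s ! (is ! l)) \<longleftrightarrow> (pat_k k ! j < pat_k k ! l)"
    unfolding contains_pattern_def len_patk s_def by blast
  have R': "\<And>j. j \<le> k \<Longrightarrow> is ! j < length s" using R L by auto
  have up: "\<And>j. 1 \<le> j \<Longrightarrow> j \<le> k \<Longrightarrow> s ! (is ! 0) < s ! (is ! j)"
    using O patk0 patkj by auto
  have dn: "\<And>j l. 1 \<le> j \<Longrightarrow> j < l \<Longrightarrow> l \<le> k \<Longrightarrow> s ! (is ! l) < s ! (is ! j)"
    using O patkj by auto
  have inc: "\<And>j l. j < l \<Longrightarrow> l \<le> k \<Longrightarrow> is ! j < is ! l"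
    using S L by (simp add: sorted_wrt_iff_nth_less)
  have tv: "\<And>p. p < length s \<Longrightarrow> p > n - a \<Longrightarrow> s ! p < a"
    using assms(4) ls by (auto simp: ns)
  consider "is ! 0 = 0" | "is ! 0 \<noteq> 0" "is ! 0 \<le> n - a" | "is ! 0 > n - a" by linarith
  then show False
  proof cases
    case 1
    have "is ! 0 + k \<le> is ! k" using sorted_lt_nth[OF S] L by auto
    then have "is ! k > n - a" using assms(3) 1 by auto
    then have "s ! (is ! k) < a" using tv R' by auto
    moreover have "s ! (is ! 0) < s ! (is ! k)" using up assms(1) by auto
    ultimately show False using 1 ns by auto
  next
    case 2
    have "is ! 0 < is ! 1" using inc assms(1) by auto
    have "s ! (is ! 0) < s ! (is ! 1)" using up assms(1) by auto
    show False
    proof (cases "is ! 1 \<le> n - a")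
      case True
      then show False using \<open>is ! 0 < is ! 1\<close> \<open>s ! (is ! 0) < s ! (is ! 1)\<close> 2 by (auto simp: ns)
    next
      case False
      then have "s ! (is ! 1) < a" using tv R' assms(1) by auto
      moreover have "s ! (is ! 0) > a" using 2 ns by auto
      ultimately show False using \<open>s ! (is ! 0) < s ! (is ! 1)\<close> by linarith
    qed
  next
    case 3
    have ge: "\<And>j. j \<le> k \<Longrightarrow> is ! j > n - a"
      using 3 inc by (metis le_neq_implies_less less_trans not_gr0 le0 nat_less_le)
    have "contains_pattern t (pat_k k)"
      unfolding contains_pattern_def len_patk
    proof (intro exI[of _ "map (\<lambda>i. i - 1 - (n - a)) is"] conjI ballI allI impI)
      show "length (map (\<lambda>i. i - 1 - (n - a)) is) = k + 1" using L by simp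
      show "sorted_wrt (<) (map (\<lambda>i. i - 1 - (n - a)) is)"
        unfolding sorted_wrt_iff_nth_less
      proof (intro allI impI)
        fix i j assume ij: "i < j" "j < length (map (\<lambda>i. i - 1 - (n - a)) is)"
        then have "is ! i < is ! j" "is ! i > n - a" using inc ge L by auto
        then show "map (\<lambda>i. i - 1 - (n - a)) is ! i < map (\<lambda>i. i - 1 - (n - a)) is ! j"
          using ij by auto
      qed
      show "i < length t" if iin: "i \<in> set (map (\<lambda>i. i - 1 - (n - a)) is)" for i
      proof -
        obtain j where j: "j < length is" "i = is ! j - 1 - (n - a)" using iin by (auto simp: in_set_conv_nth)
        then have "is ! j > n - a" "is ! j < length s" using ge R' L by auto
        then show ?thesis using j ls by linarith
      qed
      fix j l assume jl: "j < k + 1" "l < k + 1"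
      then show "(t ! (map (\<lambda>i. i - 1 - (n - a)) is ! j) < t ! (map (\<lambda>i. i - 1 - (n - a)) is ! l)) = (pat_k k ! j < pat_k k ! l)"
      proof -
        have "s ! (is ! j) = t ! (is ! j - 1 - (n - a))" "s ! (is ! l) = t ! (is ! l - 1 - (n - a))"
        proof -
          have "is ! j > n - a" "is ! l > n - a" using ge jl by auto
          then show "s ! (is ! j) = t ! (is ! j - 1 - (n - a))" "s ! (is ! l) = t ! (is ! l - 1 - (n - a))"
            using ns by auto
        qed
        moreover have "(s ! (is ! j) < s ! (is ! l)) = (pat_k k ! j < pat_k k ! l)" using O jl by blast
        ultimately show ?thesis using jl L by simp
      qed
    qed
    then show False using assms(5) by simp
  qed
qed



lemma struct:
  assumes D: "distinct (a # rest)" and St: "set (a # rest) = {1..n}" and N: "nobad (a # rest)"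
  shows "\<exists>t. rest = blk a n @ t \<and> set t = {1..a-1}"
proof -
  have P1: "rest ! p > rest ! q" if "p < q" "q < length rest" "rest ! q > a" for p q
  proof -
    have "\<not> ((a # rest) ! 0 < (a # rest) ! Suc q \<and> (a # rest) ! Suc p < (a # rest) ! Suc q)"
      using N that unfolding nobad_def by (metis Suc_less_eq length_Cons zero_less_Suc)
    then have "rest ! q \<le> rest ! p" using that by auto
    moreover have "rest ! q \<noteq> rest ! p" using D that by (simp add: nth_eq_iff_index_eq)
    ultimately show ?thesis by simp
  qed
  define L1 where "L1 = takeWhile (\<lambda>x. a < x) rest"
  define L2 where "L2 = dropWhile (\<lambda>x. a < x) rest"
  have R: "rest = L1 @ L2" unfolding L1_def L2_def by simp
  have A1: "\<forall>x\<in>set L1. a < x" unfolding L1_def by (auto dest: set_takeWhileD)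
  have A2: "\<forall>x\<in>set L2. x < a"
  proof
    fix x assume x: "x \<in> set L2"
    then obtain i where i: "i < length L2" "x = L2 ! i" by (auto simp: in_set_conv_nth)
    have ne: "L2 \<noteq> []" using x by auto
    have h: "\<not> a < L2 ! 0" using hd_dropWhile[of "\<lambda>x. a < x" rest] ne unfolding L2_def
      by (simp add: hd_conv_nth)
    have "x \<noteq> a" using D x R by auto
    moreover have "\<not> a < x"
    proof
      assume ax: "a < x"
      have "i \<noteq> 0" proof assume "i = 0" then show False using h ax i by simp qed
      then have "rest ! (length L1) > rest ! (length L1 + i)"
        using P1[of "length L1" "length L1 + i"] i ax R by (auto simp: nth_append)
      then show False using h ax i R by (auto simp: nth_append)
    qed
    ultimately show "x < a" by simp
  qed
  have sL1: "sorted_wrt (>) L1"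
    unfolding sorted_wrt_iff_nth_less
  proof (intro allI impI)
    fix i j assume ij: "i < j" "j < length L1"
    have "L1 ! j > a" using A1 ij by auto
    then have "rest ! i > rest ! j" using P1[of i j] ij R by (auto simp: nth_append)
    then show "L1 ! i > L1 ! j" using ij R by (auto simp: nth_append)
  qed
  have setr: "set rest = {1..n} - {a}"
  proof -
    have "a \<notin> set rest" using D by simp
    then show ?thesis using St by (metis Diff_insert_absorb list.set(2))
  qed
  have setL1: "set L1 = {Suc a..n}"
  proof
    show "set L1 \<subseteq> {Suc a..n}"
    proof
      fix x assume x: "x \<in> set L1"
      then have "x \<in> set rest" using R by (metis Un_iff set_append)
      then show "x \<in> {Suc a..n}" using x A1 setr by auto
    qed
    show "{Suc a..n} \<subseteq> set L1"
    proof
      fix x assume "x \<in> {Suc a..n}"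
      then have "x \<in> set rest" "\<not> x < a" using setr by auto
      then show "x \<in> set L1" using A2 R by auto
    qed
  qed
  have setL2: "set L2 = {1..a-1}"
  proof
    show "set L2 \<subseteq> {1..a-1}"
    proof
      fix x assume x: "x \<in> set L2"
      then have "x \<in> set rest" using R by (metis Un_iff set_append)
      then show "x \<in> {1..a-1}" using x A2 setr by auto
    qed
    show "{1..a-1} \<subseteq> set L2"
    proof
      fix x assume "x \<in> {1..a-1}"
      moreover have "a \<ge> 1" "a \<le> n" using St by auto
      ultimately have "x \<in> set rest" "\<not> a < x" using setr St by auto
      then show "x \<in> set L2" using A1 R by auto
    qed
  qed
  have "rev L1 = [Suc a..<Suc n]"
  proof (rule sorted_distinct_set_unique)
    show "sorted (rev L1)" using sL1 by (auto simp: sorted_wrt_rev elim: sorted_wrt_mono_rel[rotated])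
    show "distinct (rev L1)" using D R by simp
    show "sorted [Suc a..<Suc n]" by (rule sorted_upt)
    show "distinct [Suc a..<Suc n]" by simp
    show "set (rev L1) = set [Suc a..<Suc n]" using setL1 by auto
  qed
  then have "L1 = blk a n" unfolding blk_def by (metis rev_rev_ident)
  then show ?thesis using R setL2 by blast
qed



definition G :: "nat \<Rightarrow> nat \<Rightarrow> nat list set" where
  "G k n = {\<sigma> \<in> perms n. avoids \<sigma> {[1,2,3], [2,1,3], pat_k k}}"

lemma avoids_iff: "distinct s \<Longrightarrow> avoids s {[1,2,3], [2,1,3], pat_k k} \<longleftrightarrow> nobad s \<and> \<not> contains_pattern s (pat_k k)"
  by (simp add: avoids_def nobad_iff)

lemma finite_perms: "finite (perms n)"
proof -
  have "perms n \<subseteq> {xs. set xs \<subseteq> {1..n} \<and> length xs = n}"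
    unfolding perms_def using distinct_card by fastforce
  moreover have "finite {xs. set xs \<subseteq> {1..n} \<and> length xs = n}"
    by (rule finite_lists_length_eq) simp
  ultimately show ?thesis by (rule finite_subset)
qed

lemma decomp:
  assumes k: "1 \<le> k" and n: "1 \<le> n"
  shows "G k n = (\<Union>a\<in>{a. 1 \<le> a \<and> a \<le> n \<and> n - a < k}. (\<lambda>t. a # blk a n @ t) ` G k (a - 1))"
proof
  show "G k n \<subseteq> (\<Union>a\<in>{a. 1 \<le> a \<and> a \<le> n \<and> n - a < k}. (\<lambda>t. a # blk a n @ t) ` G k (a - 1))"
  proof
    fix s assume "s \<in> G k n"
    then have D: "distinct s" and St: "set s = {1..n}" and N: "nobad s" and C: "\<not> contains_pattern s (pat_k k)"
      unfolding G_def perms_def using avoids_iff by auto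
    have "s \<noteq> []" using St n by auto
    then obtain a rest where s: "s = a # rest" by (cases s) auto
    have an: "1 \<le> a" "a \<le> n" using St s by auto
    obtain t where r: "rest = blk a n @ t" and ts: "set t = {1..a-1}"
      using struct[of a rest n] D St N s by auto
    have s2: "s = (a # blk a n) @ t" using s r by simp
    have "n - a < k"
    proof (rule ccontr)
      assume "\<not> n - a < k"
      then have "contains_pattern s (pat_k k)" using contains_patk_shape[of a n k t] an s r by auto
      then show False using C by simp
    qed
    moreover have "t \<in> G k (a - 1)"
    proof -
      have dt: "distinct t" using D s2 by simp
      have "nobad t" using N s2 nobad_append by metis
      moreover have "\<not> contains_pattern t (pat_k k)" using C s2 contains_append by metis
      ultimately show ?thesis unfolding G_def perms_def using dt ts avoids_iff by auto
    qed
    ultimately show "s \<in> (\<Union>a\<in>{a. 1 \<le> a \<and> a \<le> n \<and> n - a < k}. (\<lambda>t. a # blk a n @ t) ` G k (a - 1))"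
      using an s r by auto
  qed
next
  show "(\<Union>a\<in>{a. 1 \<le> a \<and> a \<le> n \<and> n - a < k}. (\<lambda>t. a # blk a n @ t) ` G k (a - 1)) \<subseteq> G k n"
  proof (clarify)
    fix a t assume a: "1 \<le> a" "a \<le> n" "n - a < k" and t: "t \<in> G k (a - 1)"
    have dt: "distinct t" and ts: "set t = {1..a-1}" and Nt: "nobad t" and Ct: "\<not> contains_pattern t (pat_k k)"
      using t unfolding G_def perms_def using avoids_iff by auto
    have lt: "\<forall>x\<in>set t. x < a" using ts a by auto
    have ds: "distinct (a # blk a n @ t)"
      using dt lt distinct_blk[of a n] set_blk[of a n] by auto
    have ss: "set (a # blk a n @ t) = {1..n}"
      using ts a set_blk[of a n] by auto
    have "nobad (a # blk a n @ t)" using nobad_shape a(2) lt Nt by blast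
    moreover have "\<not> contains_pattern (a # blk a n @ t) (pat_k k)"
      using avoid_patk_shape[OF k a(2) a(3) lt Ct] .
    ultimately show "a # blk a n @ t \<in> G k n"
      unfolding G_def perms_def using ds ss avoids_iff by auto
  qed
qed

lemma card_rec:
  assumes k: "1 \<le> k" and n: "1 \<le> n"
  shows "card (G k n) = (\<Sum>a\<in>{a. 1 \<le> a \<and> a \<le> n \<and> n - a < k}. card (G k (a - 1)))"
  unfolding decomp[OF k n]
proof (subst card_UN_disjoint)
  show "finite {a. 1 \<le> a \<and> a \<le> n \<and> n - a < k}" by simp
  show "\<forall>i\<in>{a. 1 \<le> a \<and> a \<le> n \<and> n - a < k}. finite ((\<lambda>t. i # blk i n @ t) ` G k (i - 1))"
    using finite_perms unfolding G_def by auto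
  show "\<forall>i\<in>{a. 1 \<le> a \<and> a \<le> n \<and> n - a < k}. \<forall>j\<in>{a. 1 \<le> a \<and> a \<le> n \<and> n - a < k}. i \<noteq> j \<longrightarrow>
     (\<lambda>t. i # blk i n @ t) ` G k (i - 1) \<inter> (\<lambda>t. j # blk j n @ t) ` G k (j - 1) = {}"
    by auto
  show "(\<Sum>i\<in>{a. 1 \<le> a \<and> a \<le> n \<and> n - a < k}. card ((\<lambda>t. i # blk i n @ t) ` G k (i - 1))) =
    (\<Sum>a\<in>{a. 1 \<le> a \<and> a \<le> n \<and> n - a < k}. card (G k (a - 1)))"
    by (rule sum.cong) (auto intro!: card_image inj_onI)
qed

lemma a_seq_G: "a_seq k n = card (G k n)"
  by (simp add: a_seq_def G_def)

lemma a_seq_0: "a_seq k 0 = 1"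
proof -
  have "perms 0 = {[]}" unfolding perms_def by auto
  moreover have "avoids [] {[1,2,3], [2,1,3], pat_k k}"
    unfolding avoids_def contains_pattern_def pat_k_def by auto
  ultimately have "{\<sigma> \<in> perms 0. avoids \<sigma> {[1,2,3], [2,1,3], pat_k k}} = {[]}" by auto
  then show ?thesis unfolding a_seq_def by simp
qed

lemma a_seq_rec:
  assumes k: "1 \<le> k" and n: "1 \<le> n"
  shows "a_seq k n = (\<Sum>j\<in>{1..k}. if j \<le> n then a_seq k (n - j) else 0)"
proof -
  have "a_seq k n = (\<Sum>a\<in>{a. 1 \<le> a \<and> a \<le> n \<and> n - a < k}. a_seq k (a - 1))"
    using card_rec[OF k n] by (simp add: a_seq_G)
  also have "\<dots> = (\<Sum>j\<in>{j. 1 \<le> j \<and> j \<le> k \<and> j \<le> n}. a_seq k (n - j))"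
    by (rule sum.reindex_bij_witness[of _ "\<lambda>j. n + 1 - j" "\<lambda>a. n + 1 - a"]) auto
  also have "\<dots> = (\<Sum>j\<in>{1..k}. if j \<le> n then a_seq k (n - j) else 0)"
    by (subst sum.inter_filter[symmetric]) (auto intro!: sum.cong)
  finally show ?thesis .
qed



lemma geo_X: "(1 - fps_X) * (\<Sum>j\<in>{1..k}. fps_X ^ j) = (fps_X - fps_X ^ (k + 1) :: real fps)"
proof (induction k)
  case 0 then show ?case by simp
next
  case (Suc k)
  have "(\<Sum>j\<in>{1..Suc k}. fps_X ^ j) = (\<Sum>j\<in>{1..k}. fps_X ^ j) + (fps_X ^ Suc k :: real fps)"
    by simp
  then have "(1 - fps_X) * (\<Sum>j\<in>{1..Suc k}. fps_X ^ j) = (fps_X - fps_X ^ (k + 1)) + (1 - fps_X) * (fps_X ^ Suc k :: real fps)"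
    using Suc by (simp add: distrib_left)
  also have "\<dots> = fps_X - fps_X ^ (Suc k + 1)" by (simp add: algebra_simps)
  finally show ?case .
qed

lemma fps_main:
  fixes f :: "nat \<Rightarrow> nat"
  assumes k: "1 \<le> k" and f0: "f 0 = 1"
    and rec: "\<And>n. 1 \<le> n \<Longrightarrow> f n = (\<Sum>j\<in>{1..k}. if j \<le> n then f (n - j) else 0)"
  shows "Abs_fps (\<lambda>n. of_nat (f n) :: real) = (1 - fps_X) / (1 - 2 * fps_X + fps_X ^ (k + 1))"
proof -
  define A where "A = Abs_fps (\<lambda>n. of_nat (f n) :: real)"
  define Q where "Q = 1 - (\<Sum>j\<in>{1..k}. fps_X ^ j :: real fps)"
  have AQ: "A * Q = 1"
  proof (rule fps_ext)
    fix n
    have "fps_nth (A * Q) n = fps_nth A n - (\<Sum>j\<in>{1..k}. if n < j then 0 else fps_nth A (n - j))"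
      unfolding Q_def by (simp add: algebra_simps sum_distrib_left fps_sum_nth fps_X_power_mult_right_nth)
    also have "\<dots> = fps_nth 1 n"
    proof (cases "n = 0")
      case True then show ?thesis by (simp add: A_def f0)
    next
      case False
      then have "real (f n) = (\<Sum>j\<in>{1..k}. if j \<le> n then real (f (n - j)) else 0)"
        using rec[of n] by (simp add: of_nat_sum if_distrib cong: if_cong)
      then show ?thesis using False unfolding A_def by (auto simp: not_less intro!: sum.cong)
    qed
    finally show "fps_nth (A * Q) n = fps_nth 1 n" .
  qed
  define D where "D = (1 - 2 * fps_X + fps_X ^ (k + 1) :: real fps)"
  have QD: "(1 - fps_X) * Q = D"
    unfolding Q_def D_def using geo_X[of k] by (simp add: algebra_simps)
  have AD: "A * D = 1 - fps_X"
    using AQ QD by (metis mult.left_commute mult.right_neutral)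
  have "fps_nth D 0 = 1" unfolding D_def by simp
  then have "D \<noteq> 0" by auto
  then have "A = (A * D) / D" by simp
  then have "A = (1 - fps_X) / D" using AD by simp
  then show ?thesis unfolding A_def D_def .
qed


theorem mainTheorem1:
  fixes k :: nat
  assumes "k \<ge> 1"
  shows "Abs_fps (\<lambda>n. of_nat (a_seq k n) :: real)
           = (1 - fps_X) / (1 - 2 * fps_X + fps_X ^ (k + 1))"
  by (rule fps_main[OF assms a_seq_0 a_seq_rec[OF assms]])

end
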